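(* Let $B\in M_{Q_0}(\mathbb Z)$ be skew-symmetrizable and $G$ a group of permutations of $Q_0$. Let $(A,\mathbf x)$ be a $G$-invariant seed in $\mathcal A(B)$, with $A=(a_{ij})$ and $\mathbf x=(x_i)_{i\in Q_0}$. Let $\Omega=\{i_1,\ldots,i_n\}$ be a $G$-orbit and $(A^{(n)},\mathbf x^{(n)})=\mu_{i_n}\circ\cdots\circ\mu_{i_1}(A,\mathbf x)$. Then for every $i\in Q_0$, $$x^{(n)}_i=\begin{cases}x_i&\text{if } i\notin\Omega,\\[2pt] \dfrac{\prod_{a_{j,i_k}>0}x_j^{a_{j,i_k}}+\prod_{a_{j,i_k}<0}x_j^{-a_{j,i_k}}}{x_{i_k}}&\text{if } i=i_k \text{ for some } k.\end{cases}$$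
   Context: Skew-symmetrizable: $DB$ skew-symmetric for a positive integer diagonal $D$. Mutation of matrices: $\mu_k(M)=(m'_{ij})$ with $m'_{ij}=-m_{ij}$ if $k\in\{i,j\}$, else $m_{ij}+\tfrac12(|m_{ik}|m_{kj}+m_{ik}|m_{kj}|)$; of seeds: $\mu_k(M,\mathbf y)=(\mu_k(M),\mathbf y')$ with $y'_i=y_i$ ($i\neq k$), $y_ky'_k=\prod_{m_{ik}>0}y_i^{m_{ik}}+\prod_{m_{ik}<0}y_i^{-m_{ik}}$. $\mathcal A(B)=\mathcal A(B,\mathbf u)$ is the cluster algebra with initial seed $(B,\mathbf u)$, $\mathbf u=(u_i)_{i\in Q_0}$ indeterminates; its seeds are those obtained from $(B,\mathbf u)$ by finite sequences of mutations. $G$ acts on $\mathbb Z[\mathbf u^{\pm1}]$ by $gu_i=u_{gi}$. A permutation group $G$ is an admissible automorphism group of a matrix $S=(s_{ij})$ (and $(S,G)$ an admissible pair) if $s_{gi,gj}=s_{ij}$ for all $g,i,j$ and for distinct $i,j$ in the same $G$-orbit there is no path of length $1$ or $2$ from $i$ to $j$ in the quiver of $S$ ($s_{ij}\le0$ and no $k$ with $s_{ik}>0$, $s_{kj}>0$). A seed $(S,\mathbf x)$ of $\mathcal A(B)$ is $G$-invariant if $gx_i=x_{gi}$ for all $g\in G$, $i\in Q_0$, and $(S,G)$ is an admissible pair. *)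

theory Defs
  imports "HOL-Library.Poly_Mapping" "HOL-Computational_Algebra.Fraction_Field"
begin

text \<open>The ambient field of the cluster algebra is the field of
  rational functions Q(u_i : i in Q_0), realised as the fraction field of the integer
  polynomial ring Z[u_i : i in Q_0] (polynomials as poly_mappings from monomials to int).\<close>

type_synonym 'q ratfun = "(('q \<Rightarrow>\<^sub>0 nat) \<Rightarrow>\<^sub>0 int) fract"

definition skew_symmetrizable :: "('q::finite \<Rightarrow> 'q \<Rightarrow> int) \<Rightarrow> bool" where
  "skew_symmetrizable B \<longleftrightarrow>
     (\<exists>D::'q \<Rightarrow> int. (\<forall>i. D i > 0) \<and> (\<forall>i j. D i * B i j = - (D j * B j i)))"

text \<open>Matrix mutation (note |a| b + a |b| is always even).\<close>
definition mut_mat :: "'q \<Rightarrow> ('q \<Rightarrow> 'q \<Rightarrow> int) \<Rightarrow> ('q \<Rightarrow> 'q \<Rightarrow> int)" where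
  "mut_mat k M = (\<lambda>i j. if k = i \<or> k = j then - M i j
      else M i j + (\<bar>M i k\<bar> * M k j + M i k * \<bar>M k j\<bar>) div 2)"

definition exch :: "('q::finite \<Rightarrow> 'q \<Rightarrow> int) \<Rightarrow> ('q \<Rightarrow> 'a::field) \<Rightarrow> 'q \<Rightarrow> 'a" where
  "exch M y k = (\<Prod>i\<in>{i. M i k > 0}. y i ^ nat (M i k)) + (\<Prod>i\<in>{i. M i k < 0}. y i ^ nat (- M i k))"

definition mut_seed :: "'q::finite \<Rightarrow> ('q \<Rightarrow> 'q \<Rightarrow> int) \<times> ('q \<Rightarrow> 'a::field)
    \<Rightarrow> ('q \<Rightarrow> 'q \<Rightarrow> int) \<times> ('q \<Rightarrow> 'a)" where
  "mut_seed k S = (mut_mat k (fst S),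
     (\<lambda>i. if i = k then exch (fst S) (snd S) k / snd S k else snd S i))"

definition uvar :: "'q::linorder \<Rightarrow> 'q ratfun" where
  "uvar i = Fract (Poly_Mapping.single (Poly_Mapping.single i 1) 1) 1"

inductive_set seeds :: "('q::{finite,linorder} \<Rightarrow> 'q \<Rightarrow> int)
     \<Rightarrow> (('q \<Rightarrow> 'q \<Rightarrow> int) \<times> ('q \<Rightarrow> 'q ratfun)) set" for B where
  init: "(B, uvar) \<in> seeds B"
| mut: "S \<in> seeds B \<Longrightarrow> mut_seed k S \<in> seeds B"

definition peval :: "('q \<Rightarrow> 'a::comm_ring_1) \<Rightarrow> (('q \<Rightarrow>\<^sub>0 nat) \<Rightarrow>\<^sub>0 int) \<Rightarrow> 'a" where
  "peval f p = (\<Sum>m\<in>Poly_Mapping.keys p.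
      of_int (Poly_Mapping.lookup p m) * (\<Prod>i\<in>Poly_Mapping.keys m. f i ^ Poly_Mapping.lookup m i))"

text \<open>Action of a permutation g on the field of rational functions: the field
  automorphism with g u_i = u_{g i}.\<close>
definition gact :: "('q::linorder \<Rightarrow> 'q) \<Rightarrow> 'q ratfun \<Rightarrow> 'q ratfun" where
  "gact g x = (THE y. \<exists>p q. q \<noteq> 0 \<and> x = Fract p q \<and>
       y = peval (\<lambda>i. uvar (g i)) p / peval (\<lambda>i. uvar (g i)) q)"

definition perm_group :: "('q \<Rightarrow> 'q) set \<Rightarrow> bool" where
  "perm_group G \<longleftrightarrow> (\<forall>g\<in>G. bij g) \<and> id \<in> G \<and> (\<forall>g\<in>G. \<forall>h\<in>G. g \<circ> h \<in> G)
      \<and> (\<forall>g\<in>G. inv g \<in> G)"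

definition orbit_of :: "('q \<Rightarrow> 'q) set \<Rightarrow> 'q \<Rightarrow> 'q set" where
  "orbit_of G i = {g i | g. g \<in> G}"

definition admissible :: "('q \<Rightarrow> 'q \<Rightarrow> int) \<Rightarrow> ('q \<Rightarrow> 'q) set \<Rightarrow> bool" where
  "admissible S G \<longleftrightarrow> (\<forall>g\<in>G. \<forall>i j. S (g i) (g j) = S i j) \<and>
     (\<forall>i j. i \<noteq> j \<and> j \<in> orbit_of G i \<longrightarrow> S i j \<le> 0 \<and> \<not> (\<exists>k. S i k > 0 \<and> S k j > 0))"

definition G_invariant_seed :: "('q::{finite,linorder} \<Rightarrow> 'q \<Rightarrow> int) \<Rightarrow> ('q \<Rightarrow> 'q) set
    \<Rightarrow> ('q \<Rightarrow> 'q \<Rightarrow> int) \<Rightarrow> ('q \<Rightarrow> 'q ratfun) \<Rightarrow> bool" where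
  "G_invariant_seed B G S x \<longleftrightarrow> (S, x) \<in> seeds B \<and>
     (\<forall>g\<in>G. \<forall>i. gact g (x i) = x (g i)) \<and> admissible S G"

end

theory Submission
  imports Defs
begin
definition skw :: "('q \<Rightarrow> int) \<Rightarrow> ('q \<Rightarrow> 'q \<Rightarrow> int) \<Rightarrow> bool" where
 "skw D M \<longleftrightarrow> (\<forall>i j. D i * M i j = - (D j * M j i))"

lemma cdiv: "(\<bar>a\<bar>*b + a*\<bar>b\<bar>) div 2 = (if a>0 \<and> b>0 then a*b else if a<0 \<and> b<0 then -(a*b) else (0::int))"
  by (auto simp: abs_if)

lemma sgn_lem: assumes "(d::int) > 0" "e > 0" "d * a = - (e * b)"
  shows "(a > 0 \<longleftrightarrow> b < 0) \<and> (a < 0 \<longleftrightarrow> b > 0)"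
proof -
  have "sgn (d*a) = sgn (-(e*b))" using assms(3) by simp
  then have "sgn a = - sgn b" using assms(1,2) by (simp add: sgn_mult)
  then show ?thesis by (auto simp: sgn_if split: if_splits)
qed
lemma z2: assumes "(d::int) > 0" "e > 0" "d * a = - (e * b)" "a \<le> 0" "b \<le> 0" shows "a = 0"
  using sgn_lem[OF assms(1-3)] assms(4,5) by linarith

lemma skw_mut: assumes pos: "\<forall>i. D i > 0" and s: "skw D M" shows "skw D (mut_mat k M)"
  unfolding skw_def
proof (intro allI)
  fix i j
  show "D i * mut_mat k M i j = - (D j * mut_mat k M j i)"
  proof (cases "k = i \<or> k = j")
    case True
    have "D i * M i j = - (D j * M j i)" using s unfolding skw_def by blast
    then show ?thesis using True by (auto simp: mut_mat_def)
  next
    case False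
    have h1: "D i * M i k = - (D k * M k i)" and h2: "D j * M j k = - (D k * M k j)"
      and h3: "D i * M i j = - (D j * M j i)" using s unfolding skw_def by blast+
    have key: "D i * (M i k * M k j) = D j * (M j k * M k i)"
    proof -
      have "D i * (M i k * M k j) = (D i * M i k) * M k j" by (rule mult.assoc[symmetric])
      also have "\<dots> = - (D k * M k i * M k j)" unfolding h1 by simp
      also have "\<dots> = (D j * M j k) * M k i" unfolding h2 by simp
      finally show ?thesis by simp
    qed
    have s1: "(M i k > 0 \<longleftrightarrow> M k i < 0) \<and> (M i k < 0 \<longleftrightarrow> M k i > 0)"
      using sgn_lem[OF _ _ h1] pos by auto
    have s2: "(M j k > 0 \<longleftrightarrow> M k j < 0) \<and> (M j k < 0 \<longleftrightarrow> M k j > 0)"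
      using sgn_lem[OF _ _ h2] pos by auto
    define a where "a = M i k"
    define b where "b = M k j"
    define c where "c = M j k"
    define d where "d = M k i"
    have key2: "D i * (a * b) = D j * (c * d)" using key by (simp add: a_def b_def c_def d_def)
    have e: "D i * ((\<bar>a\<bar>*b + a*\<bar>b\<bar>) div 2) = - (D j * ((\<bar>c\<bar>*d + c*\<bar>d\<bar>) div 2))"
    proof (cases "a > 0 \<and> b > 0")
      case True
      then have "c < 0 \<and> d < 0" using s1 s2 by (simp add: a_def b_def c_def d_def)
      then show ?thesis using True key2 by (simp only: cdiv) simp
    next
      case F1: False
      show ?thesis
      proof (cases "a < 0 \<and> b < 0")
        case True
        then have "c > 0 \<and> d > 0" using s1 s2 by (simp add: a_def b_def c_def d_def)
        then show ?thesis using True key2 by (simp only: cdiv) simp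
      next
        case False
        then have "\<not> (c > 0 \<and> d > 0) \<and> \<not> (c < 0 \<and> d < 0)" using F1 s1 s2
          by (auto simp: a_def b_def c_def d_def)
        then show ?thesis using False F1 by (simp only: cdiv) simp
      qed
    qed
    have "mut_mat k M i j = M i j + (\<bar>a\<bar>*b + a*\<bar>b\<bar>) div 2"
      "mut_mat k M j i = M j i + (\<bar>c\<bar>*d + c*\<bar>d\<bar>) div 2"
      using False by (auto simp: mut_mat_def a_def b_def c_def d_def)
    then show ?thesis using h3 e by (simp add: distrib_left)
  qed
qed

lemma seeds_skw: assumes "S \<in> seeds B" "\<forall>i. D i > 0" "skw D B" shows "skw D (fst S)"
  using assms(1) by induction (auto simp: mut_seed_def intro: skw_mut[OF assms(2)] assms(3))

lemma fold_lem:
  assumes z: "\<forall>i\<in>Om. \<forall>j\<in>Om. A j i = 0"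
  shows "distinct ps \<Longrightarrow> set ps \<subseteq> Om \<Longrightarrow>
    (\<forall>i\<in>Om - set ps. \<forall>j. fst (foldl (\<lambda>S m. mut_seed m S) (A, x) ps) j i = A j i) \<and>
    (\<forall>i. i \<notin> set ps \<longrightarrow> snd (foldl (\<lambda>S m. mut_seed m S) (A, x) ps) i = x i) \<and>
    (\<forall>i\<in>set ps. snd (foldl (\<lambda>S m. mut_seed m S) (A, x) ps) i = exch A x i / x i)"
proof (induction ps rule: rev_induct)
  case Nil then show ?case by simp
next
  case (snoc m ps)
  obtain M y where My: "foldl (\<lambda>S m. mut_seed m S) (A, x) ps = (M, y)" by fastforce
  from snoc have IH: "(\<forall>i\<in>Om - set ps. \<forall>j. M j i = A j i)" "(\<forall>i. i \<notin> set ps \<longrightarrow> y i = x i)"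
      "(\<forall>i\<in>set ps. y i = exch A x i / x i)" by (auto simp: My)
  have mO: "m \<in> Om" "m \<notin> set ps" using snoc by auto
  have colm: "\<forall>j. M j m = A j m" using IH(1) mO by auto
  have ex: "exch M y m = exch A x m"
  proof -
    have yx: "y j = x j" if "A j m \<noteq> 0" for j
    proof -
      have "j \<notin> Om" using z that mO by auto
      then have "j \<notin> set ps" using snoc by auto
      then show ?thesis using IH(2) by auto
    qed
    have yx1: "\<And>j. 0 < A j m \<Longrightarrow> y j = x j" and yx2: "\<And>j. A j m < 0 \<Longrightarrow> y j = x j"
      using yx by force+
    have p1: "(\<Prod>i\<in>{i. 0 < A i m}. y i ^ nat (A i m)) = (\<Prod>i\<in>{i. 0 < A i m}. x i ^ nat (A i m))"
      by (rule prod.cong) (auto simp: yx1)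
    have p2: "(\<Prod>i\<in>{i. A i m < 0}. y i ^ nat (- A i m)) = (\<Prod>i\<in>{i. A i m < 0}. x i ^ nat (- A i m))"
      by (rule prod.cong) (auto simp: yx2)
    show ?thesis unfolding exch_def
      by (simp add: colm p1 p2)
  qed
  have res: "foldl (\<lambda>S m. mut_seed m S) (A, x) (ps @ [m]) =
     (mut_mat m M, \<lambda>i. if i = m then exch A x m / x m else y i)"
  proof -
    have "foldl (\<lambda>S m. mut_seed m S) (A, x) (ps @ [m]) = mut_seed m (M, y)" using My by simp
    also have "\<dots> = (mut_mat m M, \<lambda>i. if i = m then exch A x m / x m else y i)"
      using ex IH(2) mO unfolding mut_seed_def by auto
    finally show ?thesis .
  qed
  have c1: "\<forall>i\<in>Om - set (ps @ [m]). \<forall>j. mut_mat m M j i = A j i"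
  proof (intro ballI allI)
    fix i j assume i: "i \<in> Om - set (ps @ [m])"
    then have "M m i = 0" using IH(1) z mO by auto
    then show "mut_mat m M j i = A j i" using i IH(1) z mO by (auto simp: mut_mat_def)
  qed
  show ?case unfolding res using c1 IH(2,3) by auto
qed

theorem mainTheorem10:
  fixes B A :: "'q::{finite,linorder} \<Rightarrow> 'q \<Rightarrow> int"
    and G :: "('q \<Rightarrow> 'q) set"
    and x :: "'q \<Rightarrow> 'q ratfun"
    and ks :: "'q list"
  assumes "skew_symmetrizable B"
    and "perm_group G"
    and "G_invariant_seed B G A x"
    and "distinct ks"
    and "\<exists>i0. set ks = orbit_of G i0"
  shows "\<forall>i. (i \<notin> set ks \<longrightarrow> snd (foldl (\<lambda>S m. mut_seed m S) (A, x) ks) i = x i) \<and>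
             (\<forall>k < length ks. i = ks ! k \<longrightarrow>
                snd (foldl (\<lambda>S m. mut_seed m S) (A, x) ks) i =
                  ((\<Prod>j\<in>{j. A j (ks ! k) > 0}. x j ^ nat (A j (ks ! k)))
                   + (\<Prod>j\<in>{j. A j (ks ! k) < 0}. x j ^ nat (- A j (ks ! k)))) / x (ks ! k))"
proof -
  obtain D where D: "\<forall>i. D i > 0" "skw D B" using assms(1) unfolding skew_symmetrizable_def skw_def by blast
  have sA: "skw D A" using seeds_skw[of "(A,x)" B D] D assms(3) by (auto simp: G_invariant_seed_def)
  have adm: "admissible A G" using assms(3) by (auto simp: G_invariant_seed_def)
  obtain i0 where O: "set ks = orbit_of G i0" using assms(5) by blast
  have orb: "j \<in> orbit_of G i" if ij0: "i \<in> set ks" "j \<in> set ks" for i j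
  proof -
    obtain g h where g: "g \<in> G" "i = g i0" and h: "h \<in> G" "j = h i0"
    proof -
      have "i \<in> orbit_of G i0" "j \<in> orbit_of G i0" using ij0 O by auto
      then show ?thesis using that unfolding orbit_of_def by blast
    qed
    have "bij g" "inv g \<in> G" using g assms(2) by (auto simp: perm_group_def)
    then have "h \<circ> inv g \<in> G" "(h \<circ> inv g) i = j" using h g assms(2)
      by (auto simp: perm_group_def bij_def)
    then show ?thesis unfolding orbit_of_def by blast
  qed
  have z: "\<forall>i\<in>set ks. \<forall>j\<in>set ks. A j i = 0"
  proof (intro ballI)
    fix i j assume ij: "i \<in> set ks" "j \<in> set ks"
    show "A j i = 0"
    proof (cases "i = j")
      case True
      have "D i * A i i = - (D i * A i i)" using sA unfolding skw_def by blast
      then have "D i * A i i = 0" by simp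
      then show ?thesis using True D(1) by (metis less_irrefl mult_eq_0_iff)
    next
      case False
      have "A j i \<le> 0" "A i j \<le> 0" using adm orb[OF ij] orb[OF ij(2,1)] False
        unfolding admissible_def by auto
      moreover have "D j * A j i = - (D i * A i j)" using sA unfolding skw_def by blast
      ultimately show ?thesis using D(1) z2 by metis
    qed
  qed
  note L = fold_lem[OF z, of ks x, OF assms(4) order_refl]
  show ?thesis using L by (auto simp: exch_def)
qed

end
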